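(* Let $k$ be a positive integer. If an edge-colored graph $G$ of order $n$ satisfies $\delta^c(G)\ge n/2+64k+1$, then $G$ contains $k$ vertex-disjoint rainbow cycles.
   Context: An edge-colored graph is a finite simple graph $G$ with a map $C:E(G)\to\mathbb{N}$. The color degree $d^c(v)$ of a vertex $v$ is the number of distinct colors on edges incident to $v$; $\delta^c(G)=\min_{v\in V(G)} d^c(v)$. A subgraph is rainbow if all its edges have distinct colors. *)

theory Defs
  imports Complex_Main
begin

definition simple_graph :: "'a set \<Rightarrow> 'a set set \<Rightarrow> bool" where
  "simple_graph V E \<longleftrightarrow> finite V \<and> (\<forall>e\<in>E. e \<subseteq> V \<and> card e = 2)"

definition color_degree :: "'a set set \<Rightarrow> ('a set \<Rightarrow> nat) \<Rightarrow> 'a \<Rightarrow> nat" where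
  "color_degree E C v = card (C ` {e \<in> E. v \<in> e})"

definition min_color_degree :: "'a set \<Rightarrow> 'a set set \<Rightarrow> ('a set \<Rightarrow> nat) \<Rightarrow> nat" where
  "min_color_degree V E C = Min (color_degree E C ` V)"

definition cycle_edges :: "'a list \<Rightarrow> 'a set set" where
  "cycle_edges vs = {{vs ! i, vs ! ((i + 1) mod length vs)} | i. i < length vs}"

definition is_cycle :: "'a set \<Rightarrow> 'a set set \<Rightarrow> 'a list \<Rightarrow> bool" where
  "is_cycle V E vs \<longleftrightarrow> length vs \<ge> 3 \<and> distinct vs \<and> set vs \<subseteq> V \<and> cycle_edges vs \<subseteq> E"

definition rainbow :: "('a set \<Rightarrow> nat) \<Rightarrow> 'a set set \<Rightarrow> bool" where
  "rainbow C F \<longleftrightarrow> inj_on C F"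

end

theory Submission
  imports Defs
begin

locale cg =
  fixes E :: "'a set set" and C :: "'a set \<Rightarrow> nat"
  assumes two: "\<And>e. e \<in> E \<Longrightarrow> card e = 2"
begin

definition cd :: "'a set \<Rightarrow> 'a \<Rightarrow> nat" where
  "cd W u = card (C ` {e\<in>E. u \<in> e \<and> e \<subseteq> W})"
definition nb :: "'a set \<Rightarrow> 'a \<Rightarrow> 'a set" where
  "nb W v = {u\<in>W. {v,u} \<in> E}"
definition UU :: "'a set \<Rightarrow> 'a \<Rightarrow> 'a set" where
  "UU W v = {u \<in> nb W v. \<forall>e\<in>E. u \<in> e \<longrightarrow> e \<subseteq> W \<longrightarrow> C e = C {v,u} \<longrightarrow> e = {v,u}}"
definition BB :: "'a set \<Rightarrow> 'a \<Rightarrow> nat set" where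
  "BB W v = {c \<in> (\<lambda>u. C {v,u}) ` nb W v. \<forall>u\<in>nb W v. C {v,u} = c \<longrightarrow> u \<in> UU W v}"
definition notri :: "'a set \<Rightarrow> bool" where
  "notri W \<longleftrightarrow> (\<forall>a\<in>W. \<forall>b\<in>W. \<forall>c\<in>W. a \<noteq> b \<longrightarrow> b \<noteq> c \<longrightarrow> a \<noteq> c \<longrightarrow>
     {a,b} \<in> E \<longrightarrow> {b,c} \<in> E \<longrightarrow> {a,c} \<in> E \<longrightarrow>
     C {a,b} = C {b,c} \<or> C {b,c} = C {a,c} \<or> C {a,b} = C {a,c})"

lemma edge_form: "e \<in> E \<Longrightarrow> \<exists>a b. a \<noteq> b \<and> e = {a,b}"
  using two card_2_iff by metis

lemma edge_ne: "{a,b} \<in> E \<Longrightarrow> a \<noteq> b"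
  using two by fastforce

lemma edge_other: assumes "e \<in> E" "u \<in> e" shows "\<exists>y. y \<noteq> u \<and> e = {u,y}"
proof -
  obtain a b where ab: "a \<noteq> b" "e = {a,b}" using edge_form assms(1) by blast
  show ?thesis
  proof (cases "u = a")
    case True then show ?thesis using ab by auto
  next
    case False then have "u = b" using ab assms(2) by auto
    then show ?thesis using ab by auto
  qed
qed

lemma fin_edges: "finite W \<Longrightarrow> finite {e\<in>E. u \<in> e \<and> e \<subseteq> W}"
  by (rule finite_subset[of _ "Pow W"]) auto

lemma cd_generic:
  assumes "finite W" "finite X" "u \<notin> X"
  shows "cd W u \<le> cd (W - X) u + card X"
proof -
  have "C ` {e\<in>E. u \<in> e \<and> e \<subseteq> W} \<subseteq> C ` {e\<in>E. u \<in> e \<and> e \<subseteq> W - X} \<union> (\<lambda>y. C {u,y}) ` X"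
  proof
    fix c assume "c \<in> C ` {e\<in>E. u \<in> e \<and> e \<subseteq> W}"
    then obtain e where e: "e \<in> E" "u \<in> e" "e \<subseteq> W" "c = C e" by auto
    show "c \<in> C ` {e\<in>E. u \<in> e \<and> e \<subseteq> W - X} \<union> (\<lambda>y. C {u,y}) ` X"
    proof (cases "e \<subseteq> W - X")
      case True then show ?thesis using e by auto
    next
      case False
      then obtain y where y: "y \<in> e" "y \<in> X" using e by auto
      obtain z where "z \<noteq> u" "e = {u,z}" using edge_other e by blast
      then have "e = {u,y}" using y assms(3) by auto
      then show ?thesis using y e by auto
    qed
  qed
  then have "cd W u \<le> card (C ` {e\<in>E. u \<in> e \<and> e \<subseteq> W - X} \<union> (\<lambda>y. C {u,y}) ` X)"
    unfolding cd_def using assms by (intro card_mono) (auto intro: fin_edges)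
  also have "\<dots> \<le> cd (W - X) u + card ((\<lambda>y. C {u,y}) ` X)"
    unfolding cd_def by (rule card_Un_le)
  also have "\<dots> \<le> cd (W - X) u + card X" using card_image_le assms by auto
  finally show ?thesis .
qed

lemma cd_le: assumes "finite W" "u \<in> W" shows "cd W u \<le> card W - 1"
proof -
  have "cd W u \<le> cd (W - (W - {u})) u + card (W - {u})"
    using cd_generic[of W "W - {u}" u] assms by blast
  moreover have "W - (W - {u}) = {u}" using assms by auto
  moreover have "cd {u} u = 0"
  proof -
    have "{e\<in>E. u \<in> e \<and> e \<subseteq> {u}} = {}"
    proof (rule ccontr)
      assume "{e\<in>E. u \<in> e \<and> e \<subseteq> {u}} \<noteq> {}"
      then obtain e where "e \<in> E" "e \<subseteq> {u}" by auto
      then have "card e \<le> 1" using card_mono[of "{u}" e] by auto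
      with two \<open>e \<in> E\<close> show False by auto
    qed
    then show ?thesis unfolding cd_def by simp
  qed
  moreover have "card (W - {u}) = card W - 1" using assms by simp
  ultimately show ?thesis by simp
qed

lemma nb_sub: "nb W v \<subseteq> W - {v}"
  unfolding nb_def using edge_ne by auto

lemma UU_sub: "UU W v \<subseteq> nb W v" unfolding UU_def by auto

lemma K_eq: assumes "v \<in> W"
  shows "C ` {e\<in>E. v \<in> e \<and> e \<subseteq> W} = (\<lambda>u. C {v,u}) ` nb W v"
proof
  show "C ` {e\<in>E. v \<in> e \<and> e \<subseteq> W} \<subseteq> (\<lambda>u. C {v,u}) ` nb W v"
  proof
    fix c assume "c \<in> C ` {e\<in>E. v \<in> e \<and> e \<subseteq> W}"
    then obtain e where e: "e \<in> E" "v \<in> e" "e \<subseteq> W" "c = C e" by auto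
    obtain y where "y \<noteq> v" "e = {v,y}" using edge_other e by blast
    then show "c \<in> (\<lambda>u. C {v,u}) ` nb W v" using e unfolding nb_def by auto
  qed
  show "(\<lambda>u. C {v,u}) ` nb W v \<subseteq> C ` {e\<in>E. v \<in> e \<and> e \<subseteq> W}"
    using assms unfolding nb_def by auto
qed

lemma key1: assumes "finite W" "v \<in> W"
  shows "cd W v + card (UU W v) \<le> card (nb W v) + card (BB W v)"
proof -
  let ?f = "\<lambda>u. C {v,u}" let ?N = "nb W v" let ?K = "?f ` ?N"
  have finN: "finite ?N" using nb_sub assms finite_subset by blast
  have "?K - BB W v \<subseteq> ?f ` (?N - UU W v)"
  proof
    fix c assume c: "c \<in> ?K - BB W v"
    then obtain u where "u \<in> ?N" "?f u = c" "u \<notin> UU W v" unfolding BB_def by blast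
    then show "c \<in> ?f ` (?N - UU W v)" by blast
  qed
  then have 1: "card (?K - BB W v) \<le> card (?N - UU W v)"
    using finN by (meson card_image_le card_mono finite_Diff finite_imageI le_trans)
  have "BB W v \<subseteq> ?K" unfolding BB_def by auto
  then have 2: "card ?K = card (?K - BB W v) + card (BB W v)"
    using finN by (metis card_Diff_subset card_mono finite_imageI le_add_diff_inverse2 finite_subset)
  have 3: "card ?N = card (?N - UU W v) + card (UU W v)"
    using finN UU_sub by (metis card_Diff_subset card_mono le_add_diff_inverse2 finite_subset)
  have "cd W v = card ?K" unfolding cd_def using K_eq assms by simp
  then show ?thesis using 1 2 3 by linarith
qed

lemma UU_nonadj:
  assumes nt: "notri W" and v: "v \<in> W" and x: "x \<in> UU W v" and y: "y \<in> UU W v"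
    and ne: "C {v,x} \<noteq> C {v,y}" and xy: "{x,y} \<in> E"
  shows False
proof -
  have xN: "x \<in> W" "{v,x} \<in> E" using x unfolding UU_def nb_def by auto
  have yN: "y \<in> W" "{v,y} \<in> E" using y unfolding UU_def nb_def by auto
  have d: "v \<noteq> x" "v \<noteq> y" "x \<noteq> y" using edge_ne xN yN ne by auto
  have "C {v,x} = C {x,y} \<or> C {x,y} = C {v,y} \<or> C {v,x} = C {v,y}"
    using nt v xN yN d xy unfolding notri_def by blast
  moreover have "C {x,y} \<noteq> C {v,x}"
  proof
    assume "C {x,y} = C {v,x}"
    then have "{x,y} = {v,x}" using x xy xN yN unfolding UU_def by auto
    then show False using d by (auto simp: doubleton_eq_iff)
  qed
  moreover have "C {x,y} \<noteq> C {v,y}"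
  proof
    assume "C {x,y} = C {v,y}"
    then have "{x,y} = {v,y}" using y xy xN yN unfolding UU_def by auto
    then show False using d by (auto simp: doubleton_eq_iff)
  qed
  ultimately show False using ne by auto
qed

lemma key2:
  assumes fin: "finite W" and nt: "notri W" and v: "v \<in> W" and c: "c \<in> BB W v"
    and x: "x \<in> nb W v" and fx: "C {v,x} = c"
  shows "card (nb W x) + card (BB W v) \<le> card W"
proof -
  let ?f = "\<lambda>u. C {v,u}"
  define Y where "Y = {y \<in> nb W v. ?f y \<in> BB W v \<and> ?f y \<noteq> c}"
  have xU: "x \<in> UU W v" using c x fx unfolding BB_def by auto
  have xW: "x \<in> W" using x unfolding nb_def by auto
  have disj: "Y \<inter> nb W x = {}"
  proof (rule ccontr)
    assume "Y \<inter> nb W x \<noteq> {}"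
    then obtain y where yY: "y \<in> Y" and yx: "y \<in> nb W x" by blast
    have yU: "y \<in> UU W v" using yY unfolding Y_def BB_def by auto
    have "?f y \<noteq> ?f x" using yY fx unfolding Y_def by auto
    moreover have "{x,y} \<in> E" using yx unfolding nb_def by auto
    ultimately show False using UU_nonadj[OF nt v xU yU] by auto
  qed
  have xY: "x \<notin> Y" using fx unfolding Y_def by auto
  have sub: "Y \<union> nb W x \<subseteq> W - {x}" using xY nb_sub unfolding Y_def nb_def by auto
  have finY: "finite Y" using fin unfolding Y_def nb_def by auto
  have finNx: "finite (nb W x)" using fin unfolding nb_def by auto
  have "BB W v - {c} \<subseteq> ?f ` Y"
  proof
    fix b assume b: "b \<in> BB W v - {c}"
    then obtain y where "y \<in> nb W v" "?f y = b" unfolding BB_def by auto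
    then show "b \<in> ?f ` Y" using b unfolding Y_def by auto
  qed
  then have "card (BB W v - {c}) \<le> card Y"
    using finY by (meson card_image_le card_mono finite_imageI le_trans)
  moreover have "card (BB W v - {c}) = card (BB W v) - 1" using c by simp
  moreover have "card (BB W v) \<ge> 1"
  proof -
    have "finite (BB W v)" using fin unfolding BB_def nb_def by auto
    then have "card (BB W v) \<noteq> 0" using c by auto
    then show ?thesis by linarith
  qed
  moreover have "card Y + card (nb W x) \<le> card W - 1"
  proof -
    have "card Y + card (nb W x) = card (Y \<union> nb W x)"
      using disj finY finNx by (simp add: card_Un_disjoint)
    also have "\<dots> \<le> card (W - {x})" using sub fin by (intro card_mono) auto
    also have "\<dots> = card W - 1" using xW fin by simp
    finally show ?thesis .
  qed
  moreover have "card W \<ge> 1"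
  proof -
    have "card W \<noteq> 0" using xW fin by auto
    then show ?thesis by linarith
  qed
  ultimately show ?thesis by linarith
qed

lemma key3:
  assumes fin: "finite W" and ne: "W \<noteq> {}" and nt: "notri W"
  shows "\<exists>x\<in>W. cd W x + card (UU W x) \<le> card W"
proof -
  let ?g = "\<lambda>w. card (BB W w)"
  have "Max (?g ` W) \<in> ?g ` W" using fin ne by simp
  then obtain v where v: "v \<in> W" "?g v = Max (?g ` W)" by auto
  have vmax: "\<And>w. w \<in> W \<Longrightarrow> ?g w \<le> ?g v" using v fin by simp
  show ?thesis
  proof (cases "BB W v = {}")
    case True
    have "card (nb W v) \<le> card (W - {v})" using nb_sub fin by (intro card_mono) auto
    then have "card (nb W v) \<le> card W - 1" using v fin by simp
    then show ?thesis using key1[OF fin v(1)] True v(1) by (intro bexI[of _ v]) auto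
  next
    case False
    then obtain c where c: "c \<in> BB W v" by auto
    then obtain x where x: "x \<in> nb W v" "C {v,x} = c" unfolding BB_def by auto
    have xW: "x \<in> W" using x unfolding nb_def by auto
    have "cd W x + card (UU W x) \<le> card (nb W x) + card (BB W x)" using key1[OF fin xW] .
    also have "\<dots> \<le> card (nb W x) + card (BB W v)" using vmax[OF xW] by simp
    also have "\<dots> \<le> card W" using key2[OF fin nt v(1) c x] .
    finally show ?thesis using xW by auto
  qed
qed

lemma remove1:
  assumes fin: "finite W" and u: "u \<in> W - {x}"
  shows "cd W u \<le> cd (W - {x}) u + (if u \<in> UU W x then 1 else 0)"
proof (cases "u \<in> UU W x")
  case True then show ?thesis using cd_generic[of W "{x}" u] fin u by auto
next
  case False
  have "C ` {e\<in>E. u \<in> e \<and> e \<subseteq> W} \<subseteq> C ` {e\<in>E. u \<in> e \<and> e \<subseteq> W - {x}}"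
  proof
    fix c assume "c \<in> C ` {e\<in>E. u \<in> e \<and> e \<subseteq> W}"
    then obtain e where e: "e \<in> E" "u \<in> e" "e \<subseteq> W" "c = C e" by auto
    show "c \<in> C ` {e\<in>E. u \<in> e \<and> e \<subseteq> W - {x}}"
    proof (cases "x \<in> e")
      case False then show ?thesis using e by auto
    next
      case True
      obtain z where "z \<noteq> u" "e = {u,z}" using edge_other e by blast
      then have exu: "e = {x,u}" using True u by auto
      then have "u \<in> nb W x" using e u unfolding nb_def by auto
      then obtain e' where e': "e' \<in> E" "u \<in> e'" "e' \<subseteq> W" "C e' = C {x,u}" "e' \<noteq> {x,u}"
        using False unfolding UU_def by auto
      obtain z' where z': "z' \<noteq> u" "e' = {u,z'}" using edge_other e' by blast
      have "x \<notin> e'" using z' e'(5) u by auto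
      then have "e' \<in> {e\<in>E. u \<in> e \<and> e \<subseteq> W - {x}}" using e' by auto
      then have "C e' \<in> C ` {e\<in>E. u \<in> e \<and> e \<subseteq> W - {x}}" by (rule imageI)
      then show ?thesis using e'(4) exu e(4) by simp
    qed
  qed
  then have "cd W u \<le> cd (W - {x}) u"
    unfolding cd_def using fin by (intro card_mono) (auto intro: fin_edges)
  then show ?thesis by simp
qed

lemma notri_mono: "notri W \<Longrightarrow> W' \<subseteq> W \<Longrightarrow> notri W'"
  unfolding notri_def by blast

lemma sumbound:
  "finite W \<Longrightarrow> notri W \<Longrightarrow> 2 * (\<Sum>u\<in>W. cd W u) \<le> card W * (card W + 1)"
proof (induction "card W" arbitrary: W rule: less_induct)
  case less
  show ?case
  proof (cases "W = {}")
    case True then show ?thesis by simp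
  next
    case False
    obtain x where x: "x \<in> W" "cd W x + card (UU W x) \<le> card W"
      using key3[OF less.prems(1) False less.prems(2)] by blast
    let ?W' = "W - {x}"
    have cW': "card ?W' = card W - 1" using x less.prems by simp
    have IH: "2 * (\<Sum>u\<in>?W'. cd ?W' u) \<le> card ?W' * (card ?W' + 1)"
      using less.hyps[of ?W'] less.prems x notri_mono[of W ?W'] cW'
      by (metis Diff_subset card_Diff1_less finite_Diff)
    have "(\<Sum>u\<in>W. cd W u) = cd W x + (\<Sum>u\<in>?W'. cd W u)"
      using less.prems(1) x(1) by (simp add: sum.remove)
    also have "(\<Sum>u\<in>?W'. cd W u) \<le> (\<Sum>u\<in>?W'. cd ?W' u + (if u \<in> UU W x then 1 else 0))"
      using remove1 less.prems(1) by (intro sum_mono) auto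
    also have "\<dots> = (\<Sum>u\<in>?W'. cd ?W' u) + card (?W' \<inter> UU W x)"
      using less.prems(1) by (simp add: sum.distrib sum.If_cases)
    also have "?W' \<inter> UU W x = UU W x" using UU_sub nb_sub by blast
    finally have "(\<Sum>u\<in>W. cd W u) \<le> cd W x + card (UU W x) + (\<Sum>u\<in>?W'. cd ?W' u)" by simp
    then have "2 * (\<Sum>u\<in>W. cd W u) \<le> 2 * card W + card ?W' * (card ?W' + 1)"
      using x(2) IH by linarith
    also have "\<dots> = card W * (card W + 1)"
    proof -
      have "card W \<noteq> 0" using x less.prems by auto
      then have "card W \<ge> 1" by linarith
      then obtain m where "card W = Suc m" using not0_implies_Suc by fastforce
      then show ?thesis using cW' by (simp add: algebra_simps)
    qed
    finally show ?thesis .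
  qed
qed

lemma tri_exists:
  assumes fin: "finite W" and ne: "W \<noteq> {}"
    and deg: "\<forall>u\<in>W. real (cd W u) \<ge> real (card W) / 2 + 1"
  shows "\<not> notri W"
proof
  assume nt: "notri W"
  have sb: "2 * (\<Sum>u\<in>W. cd W u) \<le> card W * (card W + 1)" by (rule sumbound[OF fin nt])
  have "(\<Sum>u\<in>W. real (card W) / 2 + 1) \<le> (\<Sum>u\<in>W. real (cd W u))"
    using deg by (intro sum_mono) blast
  then have 1: "real (card W) * (real (card W) / 2 + 1) \<le> real (\<Sum>u\<in>W. cd W u)"
    by simp
  have 2: "2 * real (\<Sum>u\<in>W. cd W u) \<le> real (card W) * (real (card W) + 1)"
  proof -
    have "real (2 * (\<Sum>u\<in>W. cd W u)) \<le> real (card W * (card W + 1))"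
      using sb by (simp only: of_nat_le_iff)
    then show ?thesis by (simp only: of_nat_mult of_nat_add of_nat_numeral of_nat_1)
  qed
  have 3: "real (card W) > 0" using fin ne by (simp add: card_gt_0_iff)
  have e1: "real (card W) * (real (card W) / 2 + 1) * 2 = real (card W) * real (card W) + 2 * real (card W)"
    by (simp add: algebra_simps)
  have e2: "real (card W) * (real (card W) + 1) = real (card W) * real (card W) + real (card W)"
    by (simp add: algebra_simps)
  show False using 1 2 3 e1 e2 by linarith
qed

end

lemma cyc3: "cycle_edges [a,b,c] = {{a,b},{b,c},{c,a}}"
proof -
  have L: "length [a,b,c] = 3" by simp
  have "cycle_edges [a,b,c] = {{[a,b,c] ! i, [a,b,c] ! ((i + 1) mod 3)} | i. i < 3}"
    unfolding cycle_edges_def L by (rule refl)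
  also have "\<dots> = {{a,b},{b,c},{c,a}}"
  proof
    show "{{[a,b,c] ! i, [a,b,c] ! ((i + 1) mod 3)} | i. i < 3} \<subseteq> {{a,b},{b,c},{c,a}}"
    proof
      fix x assume "x \<in> {{[a,b,c] ! i, [a,b,c] ! ((i + 1) mod 3)} | i. i < 3}"
      then obtain i where i: "i < (3::nat)" "x = {[a,b,c] ! i, [a,b,c] ! ((i + 1) mod 3)}" by blast
      then have "i = 0 \<or> i = 1 \<or> i = 2" by auto
      then show "x \<in> {{a,b},{b,c},{c,a}}" using i(2) by (elim disjE) simp_all
    qed
    show "{{a,b},{b,c},{c,a}} \<subseteq> {{[a,b,c] ! i, [a,b,c] ! ((i + 1) mod 3)} | i. i < 3}"
    proof -
      let ?S = "{{[a,b,c] ! i, [a,b,c] ! ((i + 1) mod 3)} | i. i < (3::nat)}"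
      have h: "{[a,b,c] ! i, [a,b,c] ! ((i + 1) mod 3)} \<in> ?S" if "i < 3" for i
        using that by (intro CollectI exI[of _ i] conjI) simp_all
      have "{a,b} \<in> ?S" using h[of 0] by simp
      moreover have "{b,c} \<in> ?S" using h[of 1] by simp
      moreover have "{c,a} \<in> ?S" using h[of 2] by (simp add: numeral_2_eq_2)
      ultimately show ?thesis by blast
    qed
  qed
  finally show ?thesis .
qed


lemma tri_cycle:
  assumes "a \<in> W" "b \<in> W" "c \<in> W" "a \<noteq> b" "b \<noteq> c" "a \<noteq> c"
    "{a,b} \<in> E" "{b,c} \<in> E" "{a,c} \<in> E"
    "C {a,b} \<noteq> C {b,c}" "C {b,c} \<noteq> C {a,c}" "C {a,b} \<noteq> C {a,c}"
  shows "is_cycle W E [a,b,c] \<and> rainbow C (cycle_edges [a,b,c])"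
proof -
  have ca: "{c,a} = {a,c}" by auto
  show ?thesis unfolding is_cycle_def rainbow_def cyc3 ca using assms
    by (auto simp: inj_on_def)
qed

context cg begin

lemma main:
  "finite W \<Longrightarrow> W \<noteq> {} \<Longrightarrow> 1 \<le> k \<Longrightarrow>
   \<forall>u\<in>W. real (cd W u) \<ge> real (card W) / 2 + 64 * real k + 1 \<Longrightarrow>
   \<exists>cs. length cs = k \<and> (\<forall>c\<in>set cs. is_cycle W E c \<and> rainbow C (cycle_edges c))
        \<and> (\<forall>i<k. \<forall>j<k. i \<noteq> j \<longrightarrow> set (cs ! i) \<inter> set (cs ! j) = {})"
proof (induction k arbitrary: W)
  case 0 then show ?case by simp
next
  case (Suc k)
  have deg1: "\<forall>u\<in>W. real (cd W u) \<ge> real (card W) / 2 + 1"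
    using Suc.prems(4) by (auto intro: order_trans[rotated])
  have "\<not> notri W" using tri_exists[OF Suc.prems(1,2) deg1] .
  then obtain a b c where abc: "a \<in> W" "b \<in> W" "c \<in> W" "a \<noteq> b" "b \<noteq> c" "a \<noteq> c"
    "{a,b} \<in> E" "{b,c} \<in> E" "{a,c} \<in> E"
    "C {a,b} \<noteq> C {b,c}" "C {b,c} \<noteq> C {a,c}" "C {a,b} \<noteq> C {a,c}"
    unfolding notri_def by blast
  have T: "is_cycle W E [a,b,c] \<and> rainbow C (cycle_edges [a,b,c])"
    using tri_cycle[OF abc] .
  show ?case
  proof (cases "k = 0")
    case True
    then show ?thesis using T by (intro exI[of _ "[[a,b,c]]"]) auto
  next
    case False
    let ?W' = "W - {a,b,c}"
    have finW: "finite W" using Suc.prems by simp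
    obtain u0 where u0: "u0 \<in> W" using Suc.prems(2) by blast
    have "real (cd W u0) \<le> real (card W - 1)" using cd_le[OF finW u0] by simp
    moreover have "card W \<ge> 1" using u0 finW
      by (metis One_nat_def Suc_leI card_gt_0_iff empty_iff)
    ultimately have "real (cd W u0) \<le> real (card W) - 1" by (simp add: of_nat_diff)
    then have bigW: "real (card W) \<ge> 128 * real (Suc k) + 4"
      using Suc.prems(4) u0 by fastforce
    have c3: "card {a,b,c} = 3" using abc by simp
    have sub3: "{a,b,c} \<subseteq> W" using abc by simp
    have cW': "real (card ?W') = real (card W) - 3"
      using card_Diff_subset[OF _ sub3] c3 finW bigW
      by (simp add: of_nat_diff card_mono[OF finW sub3])
    have finW': "finite ?W'" using finW by simp
    have neW': "?W' \<noteq> {}"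
    proof
      assume e: "?W' = {}"
      have "card ?W' = 0" unfolding e by simp
      then show False using cW' bigW by simp
    qed
    have k1: "1 \<le> k" using False by simp
    have degW': "\<forall>u\<in>?W'. real (cd ?W' u) \<ge> real (card ?W') / 2 + 64 * real k + 1"
    proof
      fix u assume u: "u \<in> ?W'"
      have "cd W u \<le> cd ?W' u + card {a,b,c}"
        using cd_generic[OF finW _, of "{a,b,c}" u] u by simp
      then have "real (cd W u) \<le> real (cd ?W' u) + 3" using c3 by simp
      moreover have "real (cd W u) \<ge> real (card W) / 2 + 64 * real (Suc k) + 1"
        using Suc.prems(4) u by blast
      ultimately show "real (cd ?W' u) \<ge> real (card ?W') / 2 + 64 * real k + 1"
        unfolding cW' by (simp add: field_simps)
    qed
    obtain cs where cs: "length cs = k" "\<forall>c\<in>set cs. is_cycle ?W' E c \<and> rainbow C (cycle_edges c)"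
      "\<forall>i<k. \<forall>j<k. i \<noteq> j \<longrightarrow> set (cs ! i) \<inter> set (cs ! j) = {}"
      using Suc.IH[OF finW' neW' k1 degW'] by blast
    have csW: "\<forall>c\<in>set cs. is_cycle W E c \<and> set c \<subseteq> ?W'"
      using cs(2) unfolding is_cycle_def by blast
    let ?cs = "[a,b,c] # cs"
    have P1: "\<forall>x\<in>set ?cs. is_cycle W E x \<and> rainbow C (cycle_edges x)"
      using T cs(2) csW by auto
    have P2: "\<forall>i<Suc k. \<forall>j<Suc k. i \<noteq> j \<longrightarrow> set (?cs ! i) \<inter> set (?cs ! j) = {}"
    proof (intro allI impI)
      fix i j assume ij: "i < Suc k" "j < Suc k" "i \<noteq> j"
      have A: "set (cs ! m) \<subseteq> ?W'" if "m < k" for m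
        using csW cs(1) that nth_mem by blast
      show "set (?cs ! i) \<inter> set (?cs ! j) = {}"
      proof (cases i)
        case 0
        then obtain j' where "j = Suc j'" "j' < k" using ij by (cases j) auto
        then show ?thesis using A[of j'] 0 by auto
      next
        case (Suc i')
        show ?thesis
        proof (cases j)
          case 0
          then show ?thesis using A[of i'] Suc ij by auto
        next
          case (Suc j')
          then show ?thesis using cs(3) \<open>i = Suc i'\<close> ij by auto
        qed
      qed
    qed
    show ?thesis using P1 P2 cs(1) by (intro exI[of _ ?cs]) auto
  qed
qed

end


theorem corollary1:
  fixes V :: "'a set" and E :: "'a set set" and C :: "'a set \<Rightarrow> nat" and k :: nat
  assumes "simple_graph V E"
    and "V \<noteq> {}"
    and "k \<ge> 1"
    and "real (min_color_degree V E C) \<ge> real (card V) / 2 + 64 * real k + 1"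
  shows "\<exists>cs :: 'a list list. length cs = k
           \<and> (\<forall>c \<in> set cs. is_cycle V E c \<and> rainbow C (cycle_edges c))
           \<and> (\<forall>i < k. \<forall>j < k. i \<noteq> j \<longrightarrow> set (cs ! i) \<inter> set (cs ! j) = {})"
proof -
  have finV: "finite V" and EV: "\<And>e. e \<in> E \<Longrightarrow> e \<subseteq> V \<and> card e = 2"
    using assms(1) unfolding simple_graph_def by auto
  interpret cg E C by unfold_locales (use EV in blast)
  have cdeq: "cd V u = color_degree E C u" for u
  proof -
    have "{e\<in>E. u \<in> e \<and> e \<subseteq> V} = {e\<in>E. u \<in> e}" using EV by blast
    then show ?thesis unfolding cd_def color_degree_def by simp
  qed
  have deg: "\<forall>u\<in>V. real (cd V u) \<ge> real (card V) / 2 + 64 * real k + 1"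
  proof
    fix u assume u: "u \<in> V"
    have "min_color_degree V E C \<le> color_degree E C u"
      unfolding min_color_degree_def using finV u by (intro Min_le) auto
    then show "real (cd V u) \<ge> real (card V) / 2 + 64 * real k + 1"
      using assms(4) cdeq[of u] by linarith
  qed
  show ?thesis using main[OF finV assms(2) assms(3) deg] .
qed

end
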